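(* If $b$ is locally bounded, then $C_c^2([0,\infty)\times\mathbb R^d)\subset D_b(\mathcal L)$ (restricting functions to $E$) and $\overline Lf=\mathcal Lf$ on $E$ for every $f\in C_c^2([0,\infty)\times\mathbb R^d)$.
   Context: $d\ge1$; Borel $a=(a_{ij})$ and $b$ on $[0,\infty)\times\mathbb R^d$, $a$ symmetric nonnegative definite and, for all $N,r>0$, uniformly elliptic and bounded on $[0,N)\times B(0,r)$ (i.e. $C^{-1}\|\xi\|^2\le\langle a\xi,\xi\rangle\le C\|\xi\|^2$ there); $L_tf=\sum_ib_i\partial_{x_i}f+\frac12\sum_{i,j}a_{ij}\partial_{x_i}\partial_{x_j}f$, $\overline Lf=\partial_tf+L_tf$. $E\in\mathcal B([0,\infty)\times\mathbb R^d)$ and $X$ is a conservative right process on $E$ with transition function $(P_t)$ and resolvent $(U_\alpha)$, with a.s. continuous paths, such that for every $(s,x)\in E$ and $f\in C_c^2([0,\infty)\times\mathbb R^d)$, $\mathbb E_{s,x}\int_0^t|\overline Lf(X(r))|dr<\infty$ and $f(X(t))-f(X(0))-\int_0^t\overline Lf(X(r))dr$ is a continuous $(\mathcal F(t))$-martingale under $\mathbb P_{s,x}$ (the process constructed in the paper from a reference density under its standing hypotheses). Generator on $b\mathcal B(E)$: $D_b(\mathcal L)=U_\alpha(b\mathcal B(E))$ ($\alpha>0$), $\mathcal Lf=\alpha f-g$ for $f=U_\alpha g$, $g\in b\mathcal B(E)$. *)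

theory Defs
  imports "HOL-Analysis.Analysis" "HOL-Probability.Probability"
begin

text \<open>State space: [0,\<infinity>) x R^d is rendered as (a subset of) real \<times> real^'n,
  with 'n a finite index type (d = CARD('n)).\<close>

type_synonym 'n st = "real \<times> (real ^ 'n)"

definition C2 :: "('n::finite st \<Rightarrow> real) \<Rightarrow> bool" where
  "C2 f \<longleftrightarrow> (\<exists>Df D2f.
      (\<forall>z. (f has_derivative Df z) (at z)) \<and>
      (\<forall>z v. ((\<lambda>w. Df w v) has_derivative (\<lambda>u. D2f z u v)) (at z)) \<and>
      (\<forall>u v. continuous_on UNIV (\<lambda>z. D2f z u v)))"

definition C2c :: "('n::finite st \<Rightarrow> real) \<Rightarrow> bool" where
  "C2c f \<longleftrightarrow> C2 f \<and> compact (closure {z. f z \<noteq> 0})"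

definition dt :: "('n::finite st \<Rightarrow> real) \<Rightarrow> 'n st \<Rightarrow> real" where
  "dt f z = frechet_derivative f (at z) (1, 0)"

definition dx :: "'n::finite \<Rightarrow> ('n st \<Rightarrow> real) \<Rightarrow> 'n st \<Rightarrow> real" where
  "dx i f z = frechet_derivative f (at z) (0, axis i 1)"

definition Lbar :: "('n::finite st \<Rightarrow> real^'n^'n) \<Rightarrow> ('n st \<Rightarrow> real^'n)
    \<Rightarrow> ('n st \<Rightarrow> real) \<Rightarrow> 'n st \<Rightarrow> real" where
  "Lbar a b f z = dt f z + (\<Sum>i\<in>UNIV. b z $ i * dx i f z)
     + 1/2 * (\<Sum>i\<in>UNIV. \<Sum>j\<in>UNIV. a z $ i $ j * dx i (dx j f) z)"

text \<open>Transition function and resolvent of a process given by laws M z (start at z)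
  and coordinate maps X t.\<close>
definition Ptr :: "('n::finite st \<Rightarrow> 'w measure) \<Rightarrow> (real \<Rightarrow> 'w \<Rightarrow> 'n st)
    \<Rightarrow> real \<Rightarrow> ('n st \<Rightarrow> real) \<Rightarrow> 'n st \<Rightarrow> real" where
  "Ptr M X t g z = (\<integral>\<omega>. g (X t \<omega>) \<partial>M z)"

definition Res :: "('n::finite st \<Rightarrow> 'w measure) \<Rightarrow> (real \<Rightarrow> 'w \<Rightarrow> 'n st)
    \<Rightarrow> real \<Rightarrow> ('n st \<Rightarrow> real) \<Rightarrow> 'n st \<Rightarrow> real" where
  "Res M X \<alpha> g z = (LINT t:{0..}|lborel. exp (- \<alpha> * t) * Ptr M X t g z)"

definition bB :: "'n::finite st set \<Rightarrow> ('n st \<Rightarrow> real) set" where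
  "bB E = {g. g \<in> borel_measurable (restrict_space borel E) \<and> bounded (g ` E)}"

definition excessive :: "'n::finite st set \<Rightarrow> ('n st \<Rightarrow> 'w measure) \<Rightarrow> (real \<Rightarrow> 'w \<Rightarrow> 'n st)
    \<Rightarrow> real \<Rightarrow> ('n st \<Rightarrow> ennreal) \<Rightarrow> bool" where
  "excessive E M X \<alpha> h \<longleftrightarrow> h \<in> borel_measurable (restrict_space borel E) \<and>
     (\<forall>t\<ge>0. \<forall>z\<in>E. ennreal (exp (- \<alpha> * t)) * (\<integral>\<^sup>+\<omega>. h (X t \<omega>) \<partial>M z) \<le> h z) \<and>
     (\<forall>z\<in>E. ((\<lambda>t. ennreal (exp (- \<alpha> * t)) * (\<integral>\<^sup>+\<omega>. h (X t \<omega>) \<partial>M z)) \<longlongrightarrow> h z) (at_right 0))"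

text \<open>Conservative (never killed) right process on E, realised on the measurable space Om
  with laws M z, filtration F and coordinate process X.\<close>
definition right_process :: "'n::finite st set \<Rightarrow> 'w measure \<Rightarrow> ('n st \<Rightarrow> 'w measure)
    \<Rightarrow> (real \<Rightarrow> 'w set set) \<Rightarrow> (real \<Rightarrow> 'w \<Rightarrow> 'n st) \<Rightarrow> bool" where
  "right_process E Om M F X \<longleftrightarrow>
     (\<forall>z\<in>E. prob_space (M z) \<and> sets (M z) = sets Om \<and> space (M z) = space Om) \<and>
     (\<forall>t\<ge>0. sigma_algebra (space Om) (F t) \<and> F t \<subseteq> sets Om) \<and>
     (\<forall>s t. 0 \<le> s \<longrightarrow> s \<le> t \<longrightarrow> F s \<subseteq> F t) \<and>
     (\<forall>t\<ge>0. \<forall>\<omega>\<in>space Om. X t \<omega> \<in> E) \<and>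
     (\<forall>t\<ge>0. X t \<in> measurable (sigma (space Om) (F t)) borel) \<and>
     (\<forall>z\<in>E. AE \<omega> in M z. X 0 \<omega> = z) \<and>
     (\<forall>\<omega>\<in>space Om. \<forall>t\<ge>0. continuous (at_right t) (\<lambda>s. X s \<omega>)) \<and>
     (\<forall>t\<ge>0. \<forall>g\<in>bB E. Ptr M X t g \<in> borel_measurable (restrict_space borel E)) \<and>
     (\<forall>z\<in>E. \<forall>s\<ge>0. \<forall>t\<ge>0. \<forall>g\<in>bB E. \<forall>A\<in>F s.
        (LINT \<omega>:A|M z. g (X (s + t) \<omega>)) = (LINT \<omega>:A|M z. Ptr M X t g (X s \<omega>))) \<and>
     (\<forall>\<alpha>>0. \<forall>h. excessive E M X \<alpha> h \<longrightarrow>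
        (\<forall>z\<in>E. AE \<omega> in M z. \<forall>t\<ge>0. continuous (at_right t) (\<lambda>s. h (X s \<omega>))))"

definition martingale :: "'w measure \<Rightarrow> (real \<Rightarrow> 'w set set) \<Rightarrow> (real \<Rightarrow> 'w \<Rightarrow> real) \<Rightarrow> bool" where
  "martingale P F Y \<longleftrightarrow>
     (\<forall>t\<ge>0. Y t \<in> borel_measurable (sigma (space P) (F t)) \<and> integrable P (Y t)) \<and>
     (\<forall>s t. 0 \<le> s \<longrightarrow> s \<le> t \<longrightarrow> (\<forall>A\<in>F s. (LINT \<omega>:A|P. Y t \<omega>) = (LINT \<omega>:A|P. Y s \<omega>)))"

text \<open>Generator on bB(E): f \<in> D_b(L) with L f = h, via the resolvent U_alpha.\<close>
definition gen_pair :: "'n::finite st set \<Rightarrow> ('n st \<Rightarrow> 'w measure) \<Rightarrow> (real \<Rightarrow> 'w \<Rightarrow> 'n st)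
    \<Rightarrow> real \<Rightarrow> ('n st \<Rightarrow> real) \<Rightarrow> ('n st \<Rightarrow> real) \<Rightarrow> bool" where
  "gen_pair E M X \<alpha> f h \<longleftrightarrow> (\<exists>g\<in>bB E. (\<forall>z\<in>E. Res M X \<alpha> g z = f z) \<and>
        (\<forall>z\<in>E. h z = \<alpha> * f z - g z))"

end

theory Submission
  imports Defs
begin

lemma quad_entry_bound:
  fixes A :: "real^'n::finite^'n"
  assumes sym: "\<And>i j. A$i$j = A$j$i"
    and bnd: "\<And>\<xi>. 0 \<le> \<xi> \<bullet> (A *v \<xi>) \<and> \<xi> \<bullet> (A *v \<xi>) \<le> C * (norm \<xi>)\<^sup>2"
  shows "\<bar>A$i$j\<bar> \<le> C"
proof -
  define x :: "real^'n" where "x = axis i 1"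
  define y :: "real^'n" where "y = axis j 1"
  have xy: "x \<bullet> (A *v y) = A$i$j" unfolding x_def y_def
    by (simp add: inner_axis' matrix_vector_mult_basis column_def)
  have yx: "y \<bullet> (A *v x) = A$i$j" unfolding x_def y_def
    by (simp add: inner_axis' matrix_vector_mult_basis column_def sym)
  have e: "(x+y) \<bullet> (A *v (x+y)) - (x-y) \<bullet> (A *v (x-y)) = 2 * (x \<bullet> (A *v y)) + 2 * (y \<bullet> (A *v x))"
    by (simp add: matrix_vector_right_distrib matrix_vector_mult_diff_distrib inner_add_left inner_add_right inner_diff_left inner_diff_right algebra_simps)
  have n1: "norm (x+y) \<le> 2" using norm_triangle_ineq[of x y] by (simp add: x_def y_def)
  have n2: "norm (x-y) \<le> 2" using norm_triangle_ineq4[of x y] by (simp add: x_def y_def)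
  have p4: "(norm (x+y))\<^sup>2 \<le> 4" using power_mono[OF n1 norm_ge_zero, of 2] by simp
  have m4: "(norm (x-y))\<^sup>2 \<le> 4" using power_mono[OF n2 norm_ge_zero, of 2] by simp
  have C0: "C \<ge> 0" using bnd[of x] by (simp add: x_def)
  have c1: "C * (norm (x-y))\<^sup>2 \<le> C * 4" and c2: "C * (norm (x+y))\<^sup>2 \<le> C * 4"
    using C0 p4 m4 by (auto intro: mult_left_mono)
  show ?thesis using bnd[of "x+y"] bnd[of "x-y"] c1 c2 e xy yx by linarith
qed
lemma deriv_zero_outside:
  assumes "(g has_derivative G) (at z)" "open U" "z \<in> U" "\<And>w. w \<in> U \<Longrightarrow> g w = 0"
  shows "G v = 0"
proof -
  have "(g has_derivative (\<lambda>_. 0)) (at z)"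
    by (rule has_derivative_transform_within_open[OF has_derivative_const assms(2,3)]) (use assms(4) in auto)
  from has_derivative_unique[OF assms(1) this] show ?thesis by simp
qed

lemma C2c_facts:
  fixes f :: "'n::finite st \<Rightarrow> real"
  assumes "C2c f"
  obtains Df D2f S where
   "compact S" "S = closure {z. f z \<noteq> 0}"
   "\<And>z. (f has_derivative Df z) (at z)"
   "\<And>z v. ((\<lambda>w. Df w v) has_derivative (\<lambda>u. D2f z u v)) (at z)"
   "\<And>u v. continuous_on UNIV (\<lambda>z. D2f z u v)"
   "\<And>v. continuous_on UNIV (\<lambda>z. Df z v)"
   "\<And>z v. z \<notin> S \<Longrightarrow> Df z v = 0"
   "\<And>z u v. z \<notin> S \<Longrightarrow> D2f z u v = 0"
   "\<And>z. z \<notin> S \<Longrightarrow> f z = 0"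
   "continuous_on UNIV f"
proof -
  from assms obtain Df D2f where
    d1: "\<forall>z. (f has_derivative Df z) (at z)" and
    d2: "\<forall>z v. ((\<lambda>w. Df w v) has_derivative (\<lambda>u. D2f z u v)) (at z)" and
    d3: "\<forall>u v. continuous_on UNIV (\<lambda>z. D2f z u v)" and
    cS: "compact (closure {z. f z \<noteq> 0})"
    unfolding C2c_def C2_def by blast
  define S where "S = closure {z. f z \<noteq> 0}"
  have fz: "f z = 0" if "z \<notin> S" for z
  proof (rule ccontr)
    assume "f z \<noteq> 0"
    then have "z \<in> {z. f z \<noteq> 0}" by simp
    then have "z \<in> S" unfolding S_def by (rule subsetD[OF closure_subset])
    then show False using that by simp
  qed
  have oS: "open (- S)" unfolding S_def by auto
  have c1: "continuous_on UNIV (\<lambda>z. Df z v)" for v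
    using has_derivative_continuous[OF d2[rule_format]] by (simp add: continuous_at_imp_continuous_on)
  have cf: "continuous_on UNIV f"
    using has_derivative_continuous[OF d1[rule_format]] by (simp add: continuous_at_imp_continuous_on)
  have z1: "Df z v = 0" if "z \<notin> S" for z v
    using deriv_zero_outside[of f "Df z" z "- S"] d1 oS that fz by auto
  have z2: "D2f z u v = 0" if "z \<notin> S" for z u v
    using deriv_zero_outside[of "\<lambda>w. Df w v" "\<lambda>u. D2f z u v" z "- S" u] d2 oS that z1 by auto
  have cS': "compact S" using cS by (simp add: S_def)
  show ?thesis
  proof (rule that[of S Df D2f])
    show "compact S" by (fact cS')
    show "S = closure {z. f z \<noteq> 0}" by (fact S_def)
    show "(f has_derivative Df z) (at z)" for z using d1 by blast
    show "((\<lambda>w. Df w v) has_derivative (\<lambda>u. D2f z u v)) (at z)" for z v using d2 by blast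
    show "continuous_on UNIV (\<lambda>z. D2f z u v)" for u v using d3 by blast
    show "continuous_on UNIV (\<lambda>z. Df z v)" for v by (fact c1)
    show "Df z v = 0" if "z \<notin> S" for z v using z1 that by blast
    show "D2f z u v = 0" if "z \<notin> S" for z u v using z2 that by blast
    show "f z = 0" if "z \<notin> S" for z using fz that by blast
    show "continuous_on UNIV f" by (fact cf)
  qed
qed

lemma C2c_Lbar:
  fixes f :: "'n::finite st \<Rightarrow> real"
  assumes d1: "\<And>z. (f has_derivative Df z) (at z)"
   and d2: "\<And>z v. ((\<lambda>w. Df w v) has_derivative (\<lambda>u. D2f z u v)) (at z)"
  shows "Lbar a b f z = Df z (1,0) + (\<Sum>i\<in>UNIV. b z $ i * Df z (0, axis i 1))
     + 1/2 * (\<Sum>i\<in>UNIV. \<Sum>j\<in>UNIV. a z $ i $ j * D2f z (0, axis i 1) (0, axis j 1))"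
proof -
  have fd: "frechet_derivative f (at w) = Df w" for w using frechet_derivative_at[OF d1] by simp
  have dxe: "dx j f = (\<lambda>w. Df w (0, axis j 1))" for j unfolding dx_def fd by simp
  have "frechet_derivative (dx j f) (at z) = (\<lambda>u. D2f z u (0, axis j 1))" for j
    unfolding dxe using frechet_derivative_at[OF d2] by simp
  then have dxx: "dx i (dx j f) z = D2f z (0, axis i 1) (0, axis j 1)" for i j
    by (simp add: dx_def[of i "dx j f"])
  have dx1: "dx i f z = Df z (0, axis i 1)" for i by (simp add: dxe)
  show ?thesis unfolding Lbar_def dt_def dxx dx1 by (simp add: fd)
qed
lemma cont_bound:
  fixes g :: "'a::topological_space \<Rightarrow> real"
  assumes "continuous_on UNIV g" "compact S"
  shows "\<exists>B. \<forall>z\<in>S. \<bar>g z\<bar> \<le> B"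
proof -
  have "compact (g ` S)" using compact_continuous_image continuous_on_subset assms by blast
  then have "bounded (g ` S)" by (rule compact_imp_bounded)
  then show ?thesis unfolding bounded_iff by auto
qed

lemma comp_meas:
  fixes a :: "'a \<Rightarrow> real^'n::finite^'n"
  assumes "a \<in> borel_measurable M"
  shows "(\<lambda>z. a z $ i $ j) \<in> borel_measurable M"
proof -
  have "(\<lambda>A::real^'n^'n. A $ i $ j) \<in> borel_measurable borel"
    by (intro borel_measurable_continuous_onI continuous_intros)
  from measurable_compose[OF assms this] show ?thesis by simp
qed

lemma comp_meas1:
  fixes a :: "'a \<Rightarrow> real^'n::finite"
  assumes "a \<in> borel_measurable M"
  shows "(\<lambda>z. a z $ i) \<in> borel_measurable M"
proof -
  have "(\<lambda>A::real^'n. A $ i) \<in> borel_measurable borel"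
    by (intro borel_measurable_continuous_onI continuous_intros)
  from measurable_compose[OF assms this] show ?thesis by simp
qed

lemma sum_bound_lemma:
  fixes c d :: "'i \<Rightarrow> real"
  assumes "finite I" "\<And>i. i \<in> I \<Longrightarrow> \<bar>c i\<bar> \<le> K"
  shows "\<bar>\<Sum>i\<in>I. c i * d i\<bar> \<le> K * (\<Sum>i\<in>I. \<bar>d i\<bar>)"
proof -
  have "\<bar>\<Sum>i\<in>I. c i * d i\<bar> \<le> (\<Sum>i\<in>I. \<bar>c i * d i\<bar>)" by (rule sum_abs)
  also have "\<dots> \<le> (\<Sum>i\<in>I. K * \<bar>d i\<bar>)"
    by (rule sum_mono) (use assms(2) in \<open>auto simp: abs_mult intro: mult_right_mono\<close>)
  also have "\<dots> = K * (\<Sum>i\<in>I. \<bar>d i\<bar>)" by (simp add: sum_distrib_left)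
  finally show ?thesis .
qed

lemma Lbar_props:
  fixes a :: "'n::finite st \<Rightarrow> real^'n^'n" and b :: "'n st \<Rightarrow> real^'n"
    and f :: "'n st \<Rightarrow> real"
  assumes f: "C2c f"
    and a_meas: "a \<in> borel_measurable (restrict_space borel ({0..} \<times> UNIV))"
    and b_meas: "b \<in> borel_measurable (restrict_space borel ({0..} \<times> UNIV))"
    and a_sym: "\<And>z i j. fst z \<ge> 0 \<Longrightarrow> a z $ i $ j = a z $ j $ i"
    and a_ell: "\<And>N r. N > 0 \<Longrightarrow> r > 0 \<Longrightarrow> \<exists>C>0. \<forall>t x \<xi>. 0 \<le> t \<and> t < N \<and> x \<in> ball 0 r \<longrightarrow>
                  inverse C * (norm \<xi>)\<^sup>2 \<le> \<xi> \<bullet> (a (t, x) *v \<xi>) \<and>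
                  \<xi> \<bullet> (a (t, x) *v \<xi>) \<le> C * (norm \<xi>)\<^sup>2"
    and b_locbdd: "\<And>N r. N > 0 \<Longrightarrow> r > 0 \<Longrightarrow>
                  \<exists>K. \<forall>t x. 0 \<le> t \<and> t < N \<and> x \<in> ball 0 r \<longrightarrow> norm (b (t, x)) \<le> K"
  shows "\<exists>B. \<forall>z. 0 \<le> fst z \<longrightarrow> \<bar>Lbar a b f z\<bar> \<le> B"
    and "Lbar a b f \<in> borel_measurable (restrict_space borel ({0..} \<times> UNIV))"
    and "\<exists>B. \<forall>z. \<bar>f z\<bar> \<le> B"
    and "f \<in> borel_measurable borel"
proof -
  obtain Df D2f S where
   cS: "compact S" and Sdef: "S = closure {z. f z \<noteq> 0}"
   and d1: "\<And>z. (f has_derivative Df z) (at z)"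
   and d2: "\<And>z v. ((\<lambda>w. Df w v) has_derivative (\<lambda>u. D2f z u v)) (at z)"
   and c2: "\<And>u v. continuous_on UNIV (\<lambda>z. D2f z u v)"
   and c1: "\<And>v. continuous_on UNIV (\<lambda>z. Df z v)"
   and z1: "\<And>z v. z \<notin> S \<Longrightarrow> Df z v = 0"
   and z2: "\<And>z u v. z \<notin> S \<Longrightarrow> D2f z u v = 0"
   and z0: "\<And>z. z \<notin> S \<Longrightarrow> f z = 0"
   and cf: "continuous_on UNIV f"
    by (rule C2c_facts[OF f]) (rule that)
  have L: "Lbar a b f = (\<lambda>z. Df z (1,0) + (\<Sum>i\<in>UNIV. b z $ i * Df z (0, axis i 1))
     + 1/2 * (\<Sum>i\<in>UNIV. \<Sum>j\<in>UNIV. a z $ i $ j * D2f z (0, axis i 1) (0, axis j 1)))"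
    using C2c_Lbar[OF d1 d2] by blast
  show "f \<in> borel_measurable borel" using cf by (rule borel_measurable_continuous_onI)
  show "\<exists>B. \<forall>z. \<bar>f z\<bar> \<le> B"
  proof -
    obtain B where "\<forall>z\<in>S. \<bar>f z\<bar> \<le> B" using cont_bound[OF cf cS] by blast
    then have "\<forall>z. \<bar>f z\<bar> \<le> \<bar>B\<bar>"
    proof (intro allI)
      fix z assume hB: "\<forall>z\<in>S. \<bar>f z\<bar> \<le> B"
      show "\<bar>f z\<bar> \<le> \<bar>B\<bar>"
      proof (cases "z \<in> S")
        case True then show ?thesis using hB by force
      next
        case False then show ?thesis using z0 by simp
      qed
    qed
    then show ?thesis by blast
  qed
  show "Lbar a b f \<in> borel_measurable (restrict_space borel ({0..} \<times> UNIV))"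
    unfolding L
    by (intro borel_measurable_add borel_measurable_times borel_measurable_sum borel_measurable_const
         measurable_restrict_space1[OF borel_measurable_continuous_onI[OF c1]]
         measurable_restrict_space1[OF borel_measurable_continuous_onI[OF c2]]
         comp_meas[OF a_meas] comp_meas1[OF b_meas])
  show "\<exists>B. \<forall>z. 0 \<le> fst z \<longrightarrow> \<bar>Lbar a b f z\<bar> \<le> B"
  proof -
    obtain R where R: "\<forall>z\<in>S. norm z \<le> R" using compact_imp_bounded[OF cS] unfolding bounded_iff by blast
    define N where "N = \<bar>R\<bar> + 1"
    have N: "N > 0" unfolding N_def by simp
    obtain C where C: "C > 0" and Cb: "\<forall>t x \<xi>. 0 \<le> t \<and> t < N \<and> x \<in> ball 0 N \<longrightarrow>
                  inverse C * (norm \<xi>)\<^sup>2 \<le> \<xi> \<bullet> (a (t, x) *v \<xi>) \<and>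
                  \<xi> \<bullet> (a (t, x) *v \<xi>) \<le> C * (norm \<xi>)\<^sup>2" using a_ell[OF N N] by blast
    obtain K where K: "\<forall>t x. 0 \<le> t \<and> t < N \<and> x \<in> ball 0 N \<longrightarrow> norm (b (t, x)) \<le> K"
      using b_locbdd[OF N N] by blast
    obtain B1 where B1: "\<forall>z\<in>S. \<bar>Df z (1,0)\<bar> \<le> B1" using cont_bound[OF c1 cS] by blast
    have "continuous_on UNIV (\<lambda>z. \<Sum>i\<in>UNIV. \<bar>Df z (0, axis i 1)\<bar>)"
      by (intro continuous_on_rabs continuous_on_sum c1)
    then obtain B2 where B2: "\<forall>z\<in>S. \<bar>\<Sum>i\<in>UNIV. \<bar>Df z (0, axis i 1)\<bar>\<bar> \<le> B2"
      using cont_bound[OF _ cS] by blast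
    have "continuous_on UNIV (\<lambda>z. \<Sum>i\<in>UNIV. \<Sum>j\<in>UNIV. \<bar>D2f z (0, axis i 1) (0, axis j 1)\<bar>)"
      by (intro continuous_on_rabs continuous_on_sum c2)
    then obtain B3 where B3: "\<forall>z\<in>S. \<bar>\<Sum>i\<in>UNIV. \<Sum>j\<in>UNIV. \<bar>D2f z (0, axis i 1) (0, axis j 1)\<bar>\<bar> \<le> B3"
      using cont_bound[OF _ cS] by blast
    show ?thesis
    proof (intro exI allI impI)
      fix z :: "'n st" assume t0: "0 \<le> fst z"
      show "\<bar>Lbar a b f z\<bar> \<le> \<bar>B1\<bar> + \<bar>K\<bar> * \<bar>B2\<bar> + C * \<bar>B3\<bar>"
      proof (cases "z \<in> S")
        case False
        then have "Lbar a b f z = 0" unfolding L using z1 z2 by simp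
        then show ?thesis using C by simp
      next
        case True
        obtain t x where zt: "z = (t, x)" by (cases z)
        have nz: "norm z \<le> R" using R True by blast
        have "norm t \<le> norm (t, x)" by (rule norm_fst_le)
        then have "\<bar>t\<bar> \<le> R" using nz zt by simp
        then have tN: "t < N" unfolding N_def by linarith
        have "norm x \<le> norm (t, x)" by (rule norm_snd_le)
        then have "norm x \<le> R" using nz zt by simp
        then have xN: "x \<in> ball 0 N" unfolding N_def by simp
        have t0': "0 \<le> t" using t0 zt by simp
        have bi: "\<bar>b z $ i\<bar> \<le> \<bar>K\<bar>" for i
          using component_le_norm_cart[of "b z" i] K tN xN t0' zt by fastforce
        have aij: "\<bar>a z $ i $ j\<bar> \<le> C" for i j
        proof (rule quad_entry_bound)
          show "a z $ i $ j = a z $ j $ i" for i j using a_sym t0 by blast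
          show "0 \<le> \<xi> \<bullet> (a z *v \<xi>) \<and> \<xi> \<bullet> (a z *v \<xi>) \<le> C * (norm \<xi>)\<^sup>2" for \<xi>
            using Cb tN xN t0' C zt
          proof -
            have h: "inverse C * (norm \<xi>)\<^sup>2 \<le> \<xi> \<bullet> (a (t, x) *v \<xi>) \<and> \<xi> \<bullet> (a (t, x) *v \<xi>) \<le> C * (norm \<xi>)\<^sup>2"
              using Cb tN xN t0' by blast
            have "0 \<le> inverse C * (norm \<xi>)\<^sup>2" using C by simp
            then show ?thesis using h zt by simp
          qed
        qed
        have s1: "\<bar>\<Sum>i\<in>UNIV. b z $ i * Df z (0, axis i 1)\<bar> \<le> \<bar>K\<bar> * \<bar>B2\<bar>"
        proof -
          have "\<bar>\<Sum>i\<in>UNIV. b z $ i * Df z (0, axis i 1)\<bar> \<le> \<bar>K\<bar> * (\<Sum>i\<in>UNIV. \<bar>Df z (0, axis i 1)\<bar>)"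
            by (rule sum_bound_lemma) (use bi in auto)
          also have "\<dots> \<le> \<bar>K\<bar> * \<bar>B2\<bar>" using B2 True by (intro mult_left_mono) auto
          finally show ?thesis .
        qed
        have s2: "\<bar>\<Sum>i\<in>UNIV. \<Sum>j\<in>UNIV. a z $ i $ j * D2f z (0, axis i 1) (0, axis j 1)\<bar> \<le> C * \<bar>B3\<bar>"
        proof -
          have "\<bar>\<Sum>i\<in>UNIV. \<Sum>j\<in>UNIV. a z $ i $ j * D2f z (0, axis i 1) (0, axis j 1)\<bar>
             \<le> (\<Sum>i\<in>UNIV. \<bar>\<Sum>j\<in>UNIV. a z $ i $ j * D2f z (0, axis i 1) (0, axis j 1)\<bar>)" by (rule sum_abs)
          also have "\<dots> \<le> (\<Sum>i\<in>UNIV. C * (\<Sum>j\<in>UNIV. \<bar>D2f z (0, axis i 1) (0, axis j 1)\<bar>))"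
            by (intro sum_mono sum_bound_lemma) (use aij in auto)
          also have "\<dots> = C * (\<Sum>i\<in>UNIV. \<Sum>j\<in>UNIV. \<bar>D2f z (0, axis i 1) (0, axis j 1)\<bar>)"
            by (simp add: sum_distrib_left)
          also have "\<dots> \<le> C * \<bar>B3\<bar>" using B3 True C by (intro mult_left_mono) auto
          finally show ?thesis .
        qed
        have s0: "\<bar>Df z (1,0)\<bar> \<le> \<bar>B1\<bar>" using B1 True by force
        have "\<bar>Lbar a b f z\<bar> \<le> \<bar>Df z (1,0)\<bar> + \<bar>\<Sum>i\<in>UNIV. b z $ i * Df z (0, axis i 1)\<bar>
          + 1/2 * \<bar>\<Sum>i\<in>UNIV. \<Sum>j\<in>UNIV. a z $ i $ j * D2f z (0, axis i 1) (0, axis j 1)\<bar>"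
          unfolding L using abs_triangle_ineq by (simp add: abs_mult)
        then show ?thesis using s0 s1 s2 C by linarith
      qed
    qed
  qed
qed

lemma X_meas:
  assumes sa: "sigma_algebra (space Om) Ft" and sub: "Ft \<subseteq> sets Om"
    and m: "Xt \<in> measurable (sigma (space Om) Ft) (borel :: 'b::topological_space measure)"
  shows "Xt \<in> borel_measurable Om"
proof (rule measurableI)
  have P: "Ft \<subseteq> Pow (space Om)" using sa by (simp add: sigma_algebra_iff2)
  have sp: "space (sigma (space Om) Ft) = space Om" using P by simp
  have st: "sets (sigma (space Om) Ft) = Ft" using P sigma_algebra.sigma_sets_eq[OF sa] by simp
  show "Xt x \<in> space borel" for x by simp
  fix A :: "'b set" assume "A \<in> sets borel"
  then have "Xt -` A \<inter> space (sigma (space Om) Ft) \<in> sets (sigma (space Om) Ft)"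
    using m by (rule measurable_sets[rotated])
  then show "Xt -` A \<inter> space Om \<in> sets Om" using sp st sub by auto
qed

lemma joint_meas:
  fixes X :: "real \<Rightarrow> 'w \<Rightarrow> 'b::metric_space"
  assumes mX: "\<And>t. t \<ge> 0 \<Longrightarrow> X t \<in> borel_measurable Om"
    and cX: "\<And>\<omega> t. \<omega> \<in> space Om \<Longrightarrow> t \<ge> 0 \<Longrightarrow> continuous (at_right t) (\<lambda>s. X s \<omega>)"
  shows "(\<lambda>(r,\<omega>). X (max 0 r) \<omega>) \<in> borel_measurable (lborel \<Otimes>\<^sub>M Om)"
proof (rule borel_measurable_LIMSEQ_metric)
  define q where "q n r = (real_of_int \<lfloor>real (Suc n) * max 0 r\<rfloor> + 1) / real (Suc n)" for n r
  show "(\<lambda>(r,\<omega>). X (max 0 (q n r)) \<omega>) \<in> borel_measurable (lborel \<Otimes>\<^sub>M Om)" for n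
  proof -
    have g: "(\<lambda>(r::real,\<omega>::'w). \<lfloor>real (Suc n) * max 0 r\<rfloor>) \<in> (lborel \<Otimes>\<^sub>M Om) \<rightarrow>\<^sub>M count_space UNIV"
    proof -
      have "(\<lambda>r::real. real (Suc n) * max 0 r) \<in> borel_measurable lborel"
        unfolding measurable_cong_sets[OF sets_lborel refl]
        by (intro borel_measurable_continuous_onI continuous_intros)
      then have "(\<lambda>x. real (Suc n) * max 0 (fst x)) \<in> borel_measurable (lborel \<Otimes>\<^sub>M Om)"
        by (rule measurable_compose[OF measurable_fst])
      from measurable_compose[OF this measurable_real_floor] show ?thesis
        by (simp add: case_prod_beta')
    qed
    have f: "(\<lambda>x. X (max 0 ((real_of_int k + 1) / real (Suc n))) (snd x)) \<in> borel_measurable (lborel \<Otimes>\<^sub>M Om)" for k :: int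
      by (rule measurable_compose[OF measurable_snd mX]) simp
    have "(\<lambda>x. (\<lambda>k x. X (max 0 ((real_of_int k + 1) / real (Suc n))) (snd x))
              ((\<lambda>(r::real,\<omega>::'w). \<lfloor>real (Suc n) * max 0 r\<rfloor>) x) x) \<in> borel_measurable (lborel \<Otimes>\<^sub>M Om)"
      by (rule measurable_compose_countable[OF f g])
    then show ?thesis by (simp add: q_def case_prod_beta' del: of_nat_Suc)
  qed
  fix x :: "real \<times> 'w" assume "x \<in> space (lborel \<Otimes>\<^sub>M Om)"
  then obtain r :: real and \<omega> where x: "x = (r, \<omega>)" and \<omega>: "\<omega> \<in> space Om" by (auto simp: space_pair_measure)
  define t where "t = max 0 r"
  have t0: "t \<ge> 0" by (simp add: t_def)
  have qt: "q n r = (real_of_int \<lfloor>real (Suc n) * t\<rfloor> + 1) / real (Suc n)" for n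
    by (simp add: q_def t_def)
  have lo: "t < q n r" for n
  proof -
    have "real (Suc n) * t < real_of_int \<lfloor>real (Suc n) * t\<rfloor> + 1" by linarith
    then show ?thesis unfolding qt by (simp add: field_simps)
  qed
  have hi: "q n r \<le> t + inverse (real (Suc n))" for n
  proof -
    have "real_of_int \<lfloor>real (Suc n) * t\<rfloor> + 1 \<le> real (Suc n) * t + 1" by linarith
    then have "(real_of_int \<lfloor>real (Suc n) * t\<rfloor> + 1) / real (Suc n) \<le> (real (Suc n) * t + 1) / real (Suc n)"
      by (rule divide_right_mono) simp
    also have "\<dots> = t + inverse (real (Suc n))" by (simp add: field_simps del: of_nat_Suc)
    finally show ?thesis unfolding qt .
  qed
  have "(\<lambda>n. q n r) \<longlonglongrightarrow> t"
  proof (rule tendsto_sandwich[of "\<lambda>n. t" _ _ "\<lambda>n. t + inverse (real (Suc n))"])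
    show "\<forall>\<^sub>F n in sequentially. t \<le> q n r" using lo by (simp add: less_imp_le)
    show "\<forall>\<^sub>F n in sequentially. q n r \<le> t + inverse (real (Suc n))" using hi by simp
    show "(\<lambda>n. t) \<longlonglongrightarrow> t" by simp
    show "(\<lambda>n. t + inverse (real (Suc n))) \<longlonglongrightarrow> t" by (rule LIMSEQ_inverse_real_of_nat_add)
  qed
  then have fl: "filterlim (\<lambda>n. q n r) (at_right t) sequentially"
    by (rule tendsto_imp_filterlim_at_right) (use lo in simp)
  have "((\<lambda>s. X s \<omega>) \<longlongrightarrow> X t \<omega>) (at_right t)"
    using cX[OF \<omega> t0] by (simp add: continuous_within)
  from filterlim_compose[OF this fl] have "(\<lambda>n. X (q n r) \<omega>) \<longlonglongrightarrow> X t \<omega>" .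
  moreover have "max 0 (q n r) = q n r" for n using lo[of n] t0 by simp
  ultimately show "(\<lambda>n. (case x of (r,\<omega>) \<Rightarrow> X (max 0 (q n r)) \<omega>)) \<longlonglongrightarrow> (case x of (r,\<omega>) \<Rightarrow> X (max 0 r) \<omega>)"
    by (simp add: x t_def)
qed

lemma comp_meas_E:
  assumes "h \<in> borel_measurable (restrict_space borel E)" "Y \<in> measurable N borel" "\<forall>x\<in>space N. Y x \<in> E"
  shows "(\<lambda>x. h (Y x) :: real) \<in> borel_measurable N"
proof -
  have "Y \<in> measurable N (restrict_space borel E)"
    by (rule measurable_restrict_space2) (use assms in auto)
  from measurable_compose[OF this assms(1)] show ?thesis .
qed

lemma fubini_time:
  fixes P :: "'w measure" and H :: "real \<times> 'w \<Rightarrow> real"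
  assumes P: "prob_space P" and Hm: "H \<in> borel_measurable (lborel \<Otimes>\<^sub>M P)"
    and Hb: "\<And>r \<omega>. \<omega> \<in> space P \<Longrightarrow> \<bar>H (r,\<omega>)\<bar> \<le> B" and t: "t \<ge> 0"
  shows "integrable P (\<lambda>\<omega>. LINT r:{0..t}|lborel. H (r,\<omega>))"
    and "(\<integral>\<omega>. (LINT r:{0..t}|lborel. H (r,\<omega>)) \<partial>P) = (LINT r:{0..t}|lborel. (\<integral>\<omega>. H (r,\<omega>) \<partial>P))"
proof -
  interpret P: prob_space P by (rule P)
  interpret pair_sigma_finite P lborel
    by (intro pair_sigma_finite.intro P.sigma_finite_measure_axioms lborel.sigma_finite_measure_axioms)
  define G where "G = (\<lambda>(\<omega>, r). indicator {0..t} r * H (r, \<omega>))"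
  have Gm: "G \<in> borel_measurable (P \<Otimes>\<^sub>M lborel)"
  proof -
    have "(\<lambda>x. H (snd x, fst x)) \<in> borel_measurable (P \<Otimes>\<^sub>M lborel)"
      by (rule measurable_compose[OF measurable_pair_swap' Hm, unfolded case_prod_beta'])
    moreover have "(\<lambda>x. indicator {0..t} (snd x) :: real) \<in> borel_measurable (P \<Otimes>\<^sub>M lborel)"
      by (rule measurable_compose[OF measurable_snd]) simp
    ultimately show ?thesis unfolding G_def case_prod_beta' by (rule borel_measurable_times[rotated])
  qed
  have A: "space P \<times> {0..t} \<in> sets (P \<Otimes>\<^sub>M lborel)" by auto
  have "emeasure (P \<Otimes>\<^sub>M lborel) (space P \<times> {0..t}) = emeasure P (space P) * emeasure lborel {0..t}"
    by (rule lborel.emeasure_pair_measure_Times) auto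
  also have "\<dots> < \<infinity>" using t by (simp add: P.emeasure_space_1 ennreal_mult_less_top)
  finally have "integrable (P \<Otimes>\<^sub>M lborel) (indicator (space P \<times> {0..t}) :: _ \<Rightarrow> real)"
    using A by (intro integrable_real_indicator) auto
  then have Di: "integrable (P \<Otimes>\<^sub>M lborel) (\<lambda>x. B * indicator (space P \<times> {0..t}) x)" by simp
  have Gi: "integrable (P \<Otimes>\<^sub>M lborel) G"
  proof (rule Bochner_Integration.integrable_bound[OF Di Gm], rule AE_I2)
    fix x :: "'w \<times> real" assume "x \<in> space (P \<Otimes>\<^sub>M lborel)"
    then obtain \<omega> r where x: "x = (\<omega>, r)" "\<omega> \<in> space P" by (auto simp: space_pair_measure)
    have "\<bar>H (r, \<omega>)\<bar> \<le> B" using Hb x(2) .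
    then show "norm (G x) \<le> norm (B * indicator (space P \<times> {0..t}) x)"
      using x by (auto simp: G_def indicator_def)
  qed
  have e1: "(LINT r:{0..t}|lborel. H (r,\<omega>)) = (\<integral>r. G (\<omega>, r) \<partial>lborel)" for \<omega>
    by (simp add: set_lebesgue_integral_def G_def)
  have e2: "(LINT r:{0..t}|lborel. (\<integral>\<omega>. H (r,\<omega>) \<partial>P)) = (\<integral>r. (\<integral>\<omega>. G (\<omega>, r) \<partial>P) \<partial>lborel)"
    by (simp add: set_lebesgue_integral_def G_def)
  show "integrable P (\<lambda>\<omega>. LINT r:{0..t}|lborel. H (r,\<omega>))"
    unfolding e1 using integrable_fst'[OF Gi] by simp
  show "(\<integral>\<omega>. (LINT r:{0..t}|lborel. H (r,\<omega>)) \<partial>P) = (LINT r:{0..t}|lborel. (\<integral>\<omega>. H (r,\<omega>) \<partial>P))"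
    unfolding e1 e2 using Fubini_integral[of "\<lambda>\<omega> r. G (\<omega>, r)"] Gi by simp
qed

lemma exp_tail_nn:
  fixes \<alpha> r :: real assumes a: "\<alpha> > 0"
  shows "(\<integral>\<^sup>+t. ennreal (\<alpha> * exp (- \<alpha> * t) * indicator {r..} t) \<partial>lborel) = ennreal (exp (- \<alpha> * r))"
proof -
  have lim: "((\<lambda>t. - exp (- \<alpha> * t)) \<longlongrightarrow> 0) at_top"
  proof -
    have "filterlim (\<lambda>t. - \<alpha> * t) at_bot at_top"
      by (rule filterlim_tendsto_neg_mult_at_bot[OF tendsto_const _ filterlim_ident]) (use a in simp)
    from filterlim_compose[OF exp_at_bot this] have "((\<lambda>t. exp (- \<alpha> * t)) \<longlongrightarrow> 0) at_top" .
    from tendsto_minus[OF this] show ?thesis by simp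
  qed
  have "(\<integral>\<^sup>+t\<in>{r..}. ennreal (\<alpha> * exp (- \<alpha> * t)) \<partial>lborel) = ennreal (0 - (- exp (- \<alpha> * r)))"
  proof (rule nn_integral_FTC_atLeast[OF _ _ _ lim])
    show "(\<lambda>t. \<alpha> * exp (- \<alpha> * t)) \<in> borel_measurable borel" by measurable
    show "((\<lambda>t. - exp (- \<alpha> * t)) has_real_derivative \<alpha> * exp (- \<alpha> * x)) (at x)" for x
      by (auto intro!: derivative_eq_intros)
    show "0 \<le> \<alpha> * exp (- \<alpha> * x)" for x using a by simp
  qed
  moreover have "(\<integral>\<^sup>+t. ennreal (\<alpha> * exp (- \<alpha> * t) * indicator {r..} t) \<partial>lborel)
      = (\<integral>\<^sup>+t\<in>{r..}. ennreal (\<alpha> * exp (- \<alpha> * t)) \<partial>lborel)"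
    by (intro nn_integral_cong) (auto simp: indicator_def)
  ultimately show ?thesis by simp
qed

lemma exp_tail:
  fixes \<alpha> r :: real assumes a: "\<alpha> > 0"
  shows "has_bochner_integral lborel (\<lambda>t. \<alpha> * exp (- \<alpha> * t) * indicator {r..} t) (exp (- \<alpha> * r))"
proof (rule has_bochner_integral_nn_integral)
  show "(\<lambda>t. \<alpha> * exp (- \<alpha> * t) * indicator {r..} t) \<in> borel_measurable lborel" by measurable
  show "AE x in lborel. 0 \<le> \<alpha> * exp (- \<alpha> * x) * indicator {r..} x" using a by (auto simp: indicator_def)
  show "0 \<le> exp (- \<alpha> * r)" by simp
  show "(\<integral>\<^sup>+t. ennreal (\<alpha> * exp (- \<alpha> * t) * indicator {r..} t) \<partial>lborel) = ennreal (exp (- \<alpha> * r))"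
    by (rule exp_tail_nn[OF a])
qed

lemma laplace_main:
  fixes \<psi> :: "real \<Rightarrow> real" and \<alpha> B c :: real
  assumes a: "\<alpha> > 0" and \<psi>m: "\<psi> \<in> borel_measurable borel" and \<psi>b: "\<And>r. \<bar>\<psi> r\<bar> \<le> B"
  shows "(LBINT t. indicator {0..} t * (exp (- \<alpha> * t) * (\<alpha> * (c + (LBINT r. indicator {0..t} r * \<psi> r)) - \<psi> t))) = c"
proof -
  have B0: "B \<ge> 0" using \<psi>b[of 0] by simp
  define \<Psi> where "\<Psi> t = (LBINT r. indicator {0..t} r * \<psi> r)" for t
  define e where "e t = \<alpha> * exp (- \<alpha> * t) * indicator {0..} t" for t :: real
  define K where "K = (\<lambda>(t::real,r::real). if r \<le> t \<and> 0 \<le> r then \<alpha> * exp (- \<alpha> * t) * \<psi> r else 0)"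
  define D where "D = (\<lambda>(t::real,r::real). B * (\<alpha> * exp (- \<alpha> * t) * indicator {r..} t) * indicator {0..} r)"
  have \<psi>m': "\<psi> \<in> borel_measurable lborel" using \<psi>m by (simp add: measurable_cong_sets[OF sets_lborel refl])
  note \<psi>m[measurable]
  have Km: "K \<in> borel_measurable (lborel \<Otimes>\<^sub>M lborel)"
    unfolding K_def by measurable
  have Dm: "D \<in> borel_measurable (lborel \<Otimes>\<^sub>M lborel)"
  proof -
    have "D = (\<lambda>(t,r). if r \<le> t \<and> 0 \<le> r then B * \<alpha> * exp (- \<alpha> * t) else 0)"
      by (auto simp: D_def indicator_def fun_eq_iff)
    then show ?thesis by simp
  qed
  have eh: "has_bochner_integral lborel e 1"
    using exp_tail[OF a, of 0] unfolding e_def[abs_def] by simp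
  have ei: "integrable lborel e" using eh by (rule integrable.intros)
  have Dnn: "(\<integral>\<^sup>+x. ennreal (D x) \<partial>(lborel \<Otimes>\<^sub>M lborel)) < \<infinity>"
  proof -
    have inner: "(\<integral>\<^sup>+t. ennreal (D (t, r)) \<partial>lborel) = ennreal (B / \<alpha>) * ennreal (\<alpha> * exp (- \<alpha> * r) * indicator {0..} r)" for r
    proof -
      have "(\<integral>\<^sup>+t. ennreal (D (t, r)) \<partial>lborel) = (\<integral>\<^sup>+t. ennreal (B * indicator {0..} r) * ennreal (\<alpha> * exp (- \<alpha> * t) * indicator {r..} t) \<partial>lborel)"
        using B0 a by (intro nn_integral_cong) (auto simp: D_def ennreal_mult[symmetric] mult_ac)
      also have "\<dots> = ennreal (B * indicator {0..} r) * ennreal (exp (- \<alpha> * r))"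
        using exp_tail_nn[OF a, of r] by (simp add: nn_integral_cmult)
      also have "\<dots> = ennreal (B / \<alpha>) * ennreal (\<alpha> * exp (- \<alpha> * r) * indicator {0..} r)"
        using a B0 by (simp add: ennreal_mult[symmetric] indicator_def)
      finally show ?thesis .
    qed
    have "(\<integral>\<^sup>+x. ennreal (D x) \<partial>(lborel \<Otimes>\<^sub>M lborel)) = (\<integral>\<^sup>+r. (\<integral>\<^sup>+t. ennreal (D (t, r)) \<partial>lborel) \<partial>lborel)"
      by (rule lborel_pair.nn_integral_snd[symmetric]) (use Dm in simp)
    also have "\<dots> = ennreal (B / \<alpha>) * (\<integral>\<^sup>+r. ennreal (\<alpha> * exp (- \<alpha> * r) * indicator {0..} r) \<partial>lborel)"
      unfolding inner by (simp add: nn_integral_cmult)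
    also have "\<dots> = ennreal (B / \<alpha>)" using exp_tail_nn[OF a, of 0] by simp
    finally show ?thesis by simp
  qed
  have Di: "integrable (lborel \<Otimes>\<^sub>M lborel) D"
    by (rule integrableI_nonneg[OF Dm _ Dnn]) (use a B0 in \<open>auto simp: D_def indicator_def\<close>)
  have Ki: "integrable (lborel \<Otimes>\<^sub>M lborel) K"
  proof (rule Bochner_Integration.integrable_bound[OF Di Km], rule AE_I2)
    fix x :: "real \<times> real"
    obtain t r where x: "x = (t, r)" by (cases x)
    have "\<bar>\<alpha> * exp (- \<alpha> * t) * \<psi> r\<bar> \<le> \<alpha> * exp (- \<alpha> * t) * B"
      using a \<psi>b[of r] by (simp add: abs_mult mult_left_mono)
    then show "norm (K x) \<le> norm (D x)"
      using a B0 by (auto simp: x K_def D_def indicator_def mult_ac)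
  qed
  have ka: "(LBINT r. K (t, r)) = \<alpha> * exp (- \<alpha> * t) * indicator {0..} t * \<Psi> t" for t
  proof -
    have "(LBINT r. K (t, r)) = (LBINT r. (\<alpha> * exp (- \<alpha> * t) * indicator {0..} t) * (indicator {0..t} r * \<psi> r))"
      by (intro Bochner_Integration.integral_cong) (auto simp: K_def indicator_def)
    then show ?thesis by (simp add: \<Psi>_def)
  qed
  have kb: "(LBINT t. K (t, r)) = indicator {0..} r * \<psi> r * exp (- \<alpha> * r)" for r
  proof -
    have "(LBINT t. K (t, r)) = (LBINT t. (indicator {0..} r * \<psi> r) * (\<alpha> * exp (- \<alpha> * t) * indicator {r..} t))"
      by (intro Bochner_Integration.integral_cong) (auto simp: K_def indicator_def)
    also have "\<dots> = (indicator {0..} r * \<psi> r) * exp (- \<alpha> * r)"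
      using has_bochner_integral_integral_eq[OF exp_tail[OF a, of r]] by simp
    finally show ?thesis .
  qed
  have fub: "(LBINT r. indicator {0..} r * \<psi> r * exp (- \<alpha> * r)) = (LBINT t. \<alpha> * exp (- \<alpha> * t) * indicator {0..} t * \<Psi> t)"
    using lborel_pair.Fubini_integral[of "\<lambda>t r. K (t, r)"] Ki unfolding ka kb by (simp add: case_prod_beta')
  have i2: "integrable lborel (\<lambda>t. \<alpha> * exp (- \<alpha> * t) * indicator {0..} t * \<Psi> t)"
    using lborel_pair.integrable_fst'[OF Ki] unfolding ka .
  have i3: "integrable lborel (\<lambda>t. indicator {0..} t * \<psi> t * exp (- \<alpha> * t))"
  proof (rule Bochner_Integration.integrable_bound[of _ "\<lambda>t. (B / \<alpha>) * e t"])
    show "integrable lborel (\<lambda>t. B / \<alpha> * e t)" using ei by simp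
    show "(\<lambda>t. indicator {0..} t * \<psi> t * exp (- \<alpha> * t)) \<in> borel_measurable lborel" using \<psi>m' by measurable
    show "AE x in lborel. norm (indicator {0..} x * \<psi> x * exp (- \<alpha> * x)) \<le> norm (B / \<alpha> * e x)"
    proof (rule AE_I2)
      fix x :: real
      have "\<bar>\<psi> x * exp (- \<alpha> * x)\<bar> \<le> B * exp (- \<alpha> * x)" using \<psi>b[of x] by (simp add: abs_mult mult_right_mono)
      then show "norm (indicator {0..} x * \<psi> x * exp (- \<alpha> * x)) \<le> norm (B / \<alpha> * e x)"
        using a B0 by (auto simp: e_def indicator_def)
    qed
  qed
  have pw: "indicator {0..} t * (exp (- \<alpha> * t) * (\<alpha> * (c + (LBINT r. indicator {0..t} r * \<psi> r)) - \<psi> t))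
      = c * e t + \<alpha> * exp (- \<alpha> * t) * indicator {0..} t * \<Psi> t - indicator {0..} t * \<psi> t * exp (- \<alpha> * t)" for t
    by (simp add: e_def \<Psi>_def algebra_simps)
  have "(LBINT t. indicator {0..} t * (exp (- \<alpha> * t) * (\<alpha> * (c + (LBINT r. indicator {0..t} r * \<psi> r)) - \<psi> t)))
      = (LBINT t. c * e t + \<alpha> * exp (- \<alpha> * t) * indicator {0..} t * \<Psi> t - indicator {0..} t * \<psi> t * exp (- \<alpha> * t))"
    unfolding pw ..
  also have "\<dots> = c * (LBINT t. e t) + (LBINT t. \<alpha> * exp (- \<alpha> * t) * indicator {0..} t * \<Psi> t) - (LBINT t. indicator {0..} t * \<psi> t * exp (- \<alpha> * t))"
    using ei i2 i3 by simp
  also have "\<dots> = c" using has_bochner_integral_integral_eq[OF eh] fub by simp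
  finally show ?thesis .
qed

lemma abs_int_bound:
  assumes P: "prob_space P" and m: "f \<in> borel_measurable P" and b: "\<And>x. x \<in> space P \<Longrightarrow> \<bar>f x\<bar> \<le> (B::real)"
  shows "\<bar>integral\<^sup>L P f\<bar> \<le> B" and "integrable P f"
proof -
  interpret prob_space P by (rule P)
  show fi: "integrable P f"
    by (rule integrable_const_bound[where B=B]) (use b m in auto)
  have "\<bar>integral\<^sup>L P f\<bar> \<le> integral\<^sup>L P (\<lambda>_. B)"
    using fi b by (intro order_trans[OF integral_abs_bound] integral_mono) auto
  then show "\<bar>integral\<^sup>L P f\<bar> \<le> B" by (simp add: prob_space)
qed

lemma sa_top: "sigma_algebra \<Omega> A \<Longrightarrow> \<Omega> \<in> A"
  unfolding sigma_algebra_iff2 by (metis Diff_empty)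

lemma main_res:
  fixes E :: "'n::finite st set" and Om :: "'w measure" and M :: "'n st \<Rightarrow> 'w measure"
    and F :: "real \<Rightarrow> 'w set set" and X :: "real \<Rightarrow> 'w \<Rightarrow> 'n st"
    and f h :: "'n st \<Rightarrow> real"
  assumes a: "\<alpha> > 0" and z: "z \<in> E"
    and P1: "prob_space (M z)" "sets (M z) = sets Om" "space (M z) = space Om"
    and P2: "\<And>t. t \<ge> 0 \<Longrightarrow> sigma_algebra (space Om) (F t) \<and> F t \<subseteq> sets Om"
    and P4: "\<And>t \<omega>. t \<ge> 0 \<Longrightarrow> \<omega> \<in> space Om \<Longrightarrow> X t \<omega> \<in> E"
    and P5: "\<And>t. t \<ge> 0 \<Longrightarrow> X t \<in> measurable (sigma (space Om) (F t)) borel"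
    and P6: "AE \<omega> in M z. X 0 \<omega> = z"
    and P7: "\<And>\<omega> t. \<omega> \<in> space Om \<Longrightarrow> t \<ge> 0 \<Longrightarrow> continuous (at_right t) (\<lambda>s. X s \<omega>)"
    and hm: "h \<in> borel_measurable (restrict_space borel E)"
    and hb: "\<And>w. w \<in> E \<Longrightarrow> \<bar>h w\<bar> \<le> BL"
    and fm: "f \<in> borel_measurable borel"
    and fb: "\<And>w. \<bar>f w\<bar> \<le> Bf"
    and mart: "martingale (M z) F (\<lambda>t \<omega>. f (X t \<omega>) - f (X 0 \<omega>) - (LINT r:{0..t}|lborel. h (X r \<omega>)))"
  shows "Res M X \<alpha> (\<lambda>w. \<alpha> * f w - h w) z = f z"
proof -
  define P where "P = M z"
  interpret P: prob_space P unfolding P_def by (rule P1(1))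
  have spP: "space P = space Om" unfolding P_def by (rule P1(3))
  have XmO: "X t \<in> borel_measurable Om" if "t \<ge> 0" for t
    using X_meas[of Om "F t" "X t"] P2[OF that] P5[OF that] by blast
  have Xm: "X t \<in> borel_measurable P" if "t \<ge> 0" for t
    unfolding P_def by (subst measurable_cong_sets[OF P1(2) refl]) (rule XmO[OF that])
  have YP: "(\<lambda>(r,\<omega>). X (max 0 r) \<omega>) \<in> borel_measurable (lborel \<Otimes>\<^sub>M P)"
    by (rule joint_meas[OF Xm]) (use P7 spP in auto)
  have YE: "\<forall>x\<in>space (lborel \<Otimes>\<^sub>M P). (case x of (r,\<omega>) \<Rightarrow> X (max 0 r) \<omega>) \<in> E"
    using P4 spP by (auto simp: space_pair_measure)
  define H where "H = (\<lambda>x. h (case x of (r,\<omega>) \<Rightarrow> X (max 0 r) \<omega>))"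
  have Hm: "H \<in> borel_measurable (lborel \<Otimes>\<^sub>M P)"
    unfolding H_def by (rule comp_meas_E[OF hm YP YE])
  have Hb: "\<bar>H (r,\<omega>)\<bar> \<le> BL" if "\<omega> \<in> space P" for r \<omega>
    unfolding H_def using hb P4 that spP by simp
  define \<psi> where "\<psi> r = (\<integral>\<omega>. H (r,\<omega>) \<partial>P)" for r
  have \<psi>m: "\<psi> \<in> borel_measurable borel"
  proof -
    have "(\<lambda>r. \<integral>\<omega>. H (r,\<omega>) \<partial>P) \<in> borel_measurable lborel"
      by (rule P.borel_measurable_lebesgue_integral) (use Hm in \<open>simp add: case_prod_beta'\<close>)
    then show ?thesis unfolding \<psi>_def by (simp add: measurable_cong_sets[OF sets_lborel refl])
  qed
  have Hmr: "(\<lambda>\<omega>. H (r,\<omega>)) \<in> borel_measurable P" for r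
    using measurable_Pair2[OF Hm] by simp
  have \<psi>b: "\<bar>\<psi> r\<bar> \<le> BL" for r
    unfolding \<psi>_def using abs_int_bound(1)[OF P.prob_space_axioms Hmr Hb] .
  have hXm: "(\<lambda>\<omega>. h (X t \<omega>)) \<in> borel_measurable P" if "t \<ge> 0" for t
    using Hmr[of t] that unfolding H_def by simp
  have fXm: "(\<lambda>\<omega>. f (X t \<omega>)) \<in> borel_measurable P" if "t \<ge> 0" for t
    using measurable_compose[OF Xm[OF that] fm] by simp
  have fXi: "integrable P (\<lambda>\<omega>. f (X t \<omega>))" if "t \<ge> 0" for t
    using abs_int_bound(2)[OF P.prob_space_axioms fXm[OF that], of Bf] fb by blast
  have hXi: "integrable P (\<lambda>\<omega>. h (X t \<omega>))" if "t \<ge> 0" for t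
    using abs_int_bound(2)[OF P.prob_space_axioms hXm[OF that], of BL] hb P4 that spP by blast
  have \<psi>eq: "\<psi> t = (\<integral>\<omega>. h (X t \<omega>) \<partial>P)" if "t \<ge> 0" for t
    unfolding \<psi>_def H_def using that by simp
  have Phi: "(\<integral>\<omega>. f (X t \<omega>) \<partial>P) = f z + (LBINT r. indicator {0..t} r * \<psi> r)" if t0: "t \<ge> 0" for t
  proof -
    define I where "I \<omega> = (LINT r:{0..t}|lborel. h (X r \<omega>))" for \<omega>
    have IH: "I \<omega> = (LINT r:{0..t}|lborel. H (r, \<omega>))" for \<omega>
      unfolding I_def H_def set_lebesgue_integral_def
      by (intro Bochner_Integration.integral_cong) (auto simp: indicator_def)
    have Ii: "integrable P I" unfolding IH by (rule fubini_time(1)[OF P.prob_space_axioms Hm Hb t0])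
    have IE: "(\<integral>\<omega>. I \<omega> \<partial>P) = (LBINT r. indicator {0..t} r * \<psi> r)"
    proof -
      have "(\<integral>\<omega>. I \<omega> \<partial>P) = (\<integral>\<omega>. (LINT r:{0..t}|lborel. H (r,\<omega>)) \<partial>P)" using IH by simp
      also have "\<dots> = (LINT r:{0..t}|lborel. (\<integral>\<omega>. H (r,\<omega>) \<partial>P))"
        by (rule fubini_time(2)[OF P.prob_space_axioms Hm Hb t0])
      finally show ?thesis by (simp add: set_lebesgue_integral_def \<psi>_def)
    qed
    have mt: "integrable P (\<lambda>\<omega>. f (X t \<omega>) - f (X 0 \<omega>) - I \<omega>)"
      and meq: "\<And>s t A. 0 \<le> s \<Longrightarrow> s \<le> t \<Longrightarrow> A \<in> F s \<Longrightarrow>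
          (LINT \<omega>:A|P. f (X t \<omega>) - f (X 0 \<omega>) - (LINT r:{0..t}|lborel. h (X r \<omega>)))
        = (LINT \<omega>:A|P. f (X s \<omega>) - f (X 0 \<omega>) - (LINT r:{0..s}|lborel. h (X r \<omega>)))"
      using mart t0 unfolding martingale_def P_def I_def by blast+
    have sp0: "space P \<in> F 0" using sa_top[of "space Om" "F 0"] P2[of 0] spP by simp
    have zero0: "(LINT r:{0..0}|lborel. h (X r \<omega>)) = 0" for \<omega>
      unfolding set_lebesgue_integral_def
      by (rule integral_eq_zero_AE) (use AE_lborel_singleton[of 0] in \<open>auto elim!: AE_mp\<close>)
    have "(LINT \<omega>:space P|P. f (X t \<omega>) - f (X 0 \<omega>) - I \<omega>) = (LINT \<omega>:space P|P. (0::real))"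
      using meq[OF order_refl t0 sp0] unfolding I_def zero0 by simp
    then have "(\<integral>\<omega>. f (X t \<omega>) - f (X 0 \<omega>) - I \<omega> \<partial>P) = 0"
      using mt by (simp add: set_integral_space)
    then have "(\<integral>\<omega>. f (X t \<omega>) \<partial>P) - (\<integral>\<omega>. f (X 0 \<omega>) \<partial>P) - (\<integral>\<omega>. I \<omega> \<partial>P) = 0"
      using fXi[OF t0] fXi[of 0] Ii by simp
    moreover have "(\<integral>\<omega>. f (X 0 \<omega>) \<partial>P) = f z"
    proof -
      have "(\<integral>\<omega>. f (X 0 \<omega>) \<partial>P) = (\<integral>\<omega>. f z \<partial>P)"
      proof (rule integral_cong_AE)
        have "AE \<omega> in P. X 0 \<omega> = z" unfolding P_def by (rule P6)
        then show "AE \<omega> in P. f (X 0 \<omega>) = f z" by (rule AE_mp) (intro AE_I2, simp)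
      qed (use fXm[of 0] in auto)
      then show ?thesis by (simp add: P.prob_space)
    qed
    ultimately show ?thesis using IE by simp
  qed
  have Ptr_eq: "Ptr M X t (\<lambda>w. \<alpha> * f w - h w) z = \<alpha> * (f z + (LBINT r. indicator {0..t} r * \<psi> r)) - \<psi> t"
    if t0: "t \<ge> 0" for t
  proof -
    have "Ptr M X t (\<lambda>w. \<alpha> * f w - h w) z = (\<integral>\<omega>. \<alpha> * f (X t \<omega>) - h (X t \<omega>) \<partial>P)"
      by (simp add: Ptr_def P_def)
    also have "\<dots> = \<alpha> * (\<integral>\<omega>. f (X t \<omega>) \<partial>P) - (\<integral>\<omega>. h (X t \<omega>) \<partial>P)"
      using fXi[OF t0] hXi[OF t0] by simp
    finally show ?thesis using Phi[OF t0] \<psi>eq[OF t0] by simp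
  qed
  have "Res M X \<alpha> (\<lambda>w. \<alpha> * f w - h w) z
      = (LBINT t. indicator {0..} t * (exp (- \<alpha> * t) * (\<alpha> * (f z + (LBINT r. indicator {0..t} r * \<psi> r)) - \<psi> t)))"
    unfolding Res_def set_lebesgue_integral_def
    by (intro Bochner_Integration.integral_cong) (auto simp: indicator_def Ptr_eq)
  also have "\<dots> = f z" by (rule laplace_main[OF a \<psi>m \<psi>b])
  finally show ?thesis .
qed

theorem lemma3p12:
  fixes a :: "'n::finite st \<Rightarrow> real^'n^'n" and b :: "'n st \<Rightarrow> real^'n"
    and E :: "'n st set" and Om :: "'w measure" and M :: "'n st \<Rightarrow> 'w measure"
    and F :: "real \<Rightarrow> 'w set set" and X :: "real \<Rightarrow> 'w \<Rightarrow> 'n st"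
  assumes a_meas: "a \<in> borel_measurable (restrict_space borel ({0..} \<times> UNIV))"
    and b_meas: "b \<in> borel_measurable (restrict_space borel ({0..} \<times> UNIV))"
    and a_sym: "\<And>z i j. fst z \<ge> 0 \<Longrightarrow> a z $ i $ j = a z $ j $ i"
    and a_nonneg: "\<And>z \<xi>. fst z \<ge> 0 \<Longrightarrow> 0 \<le> \<xi> \<bullet> (a z *v \<xi>)"
    and a_ell: "\<And>N r. N > 0 \<Longrightarrow> r > 0 \<Longrightarrow> \<exists>C>0. \<forall>t x \<xi>. 0 \<le> t \<and> t < N \<and> x \<in> ball 0 r \<longrightarrow>
                  inverse C * (norm \<xi>)\<^sup>2 \<le> \<xi> \<bullet> (a (t, x) *v \<xi>) \<and>
                  \<xi> \<bullet> (a (t, x) *v \<xi>) \<le> C * (norm \<xi>)\<^sup>2"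
    and b_locbdd: "\<And>N r. N > 0 \<Longrightarrow> r > 0 \<Longrightarrow>
                  \<exists>K. \<forall>t x. 0 \<le> t \<and> t < N \<and> x \<in> ball 0 r \<longrightarrow> norm (b (t, x)) \<le> K"
    and E_borel: "E \<in> sets borel" and E_sub: "E \<subseteq> {0..} \<times> UNIV"
    and rp: "right_process E Om M F X"
    and cont_paths: "\<And>z. z \<in> E \<Longrightarrow> AE \<omega> in M z. continuous_on {0..} (\<lambda>t. X t \<omega>)"
    and mp_int: "\<And>z f t. z \<in> E \<Longrightarrow> C2c f \<Longrightarrow> t \<ge> 0 \<Longrightarrow>
        (\<integral>\<^sup>+\<omega>. (\<integral>\<^sup>+r\<in>{0..t}. ennreal \<bar>Lbar a b f (X r \<omega>)\<bar> \<partial>lborel) \<partial>M z) < \<infinity>"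
    and mp_mart: "\<And>z f. z \<in> E \<Longrightarrow> C2c f \<Longrightarrow>
        martingale (M z) F (\<lambda>t \<omega>. f (X t \<omega>) - f (X 0 \<omega>) - (LINT r:{0..t}|lborel. Lbar a b f (X r \<omega>)))"
    and mp_cont: "\<And>z f. z \<in> E \<Longrightarrow> C2c f \<Longrightarrow>
        AE \<omega> in M z. continuous_on {0..}
          (\<lambda>t. f (X t \<omega>) - f (X 0 \<omega>) - (LINT r:{0..t}|lborel. Lbar a b f (X r \<omega>)))"
  shows "\<forall>f. C2c f \<longrightarrow> (\<forall>\<alpha>>0. gen_pair E M X \<alpha> f (Lbar a b f))"
proof (intro allI impI)
  fix f :: "'n st \<Rightarrow> real" and \<alpha> :: real
  assume f: "C2c f" and a: "\<alpha> > 0"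
  obtain BL where BL: "\<forall>z. 0 \<le> fst z \<longrightarrow> \<bar>Lbar a b f z\<bar> \<le> BL"
    using Lbar_props(1)[OF f a_meas b_meas a_sym a_ell b_locbdd] by blast
  have Lm: "Lbar a b f \<in> borel_measurable (restrict_space borel ({0..} \<times> UNIV))"
    by (rule Lbar_props(2)[OF f a_meas b_meas a_sym a_ell b_locbdd])
  obtain Bf where Bf: "\<forall>z. \<bar>f z\<bar> \<le> Bf"
    using Lbar_props(3)[OF f a_meas b_meas a_sym a_ell b_locbdd] by blast
  have fm: "f \<in> borel_measurable borel"
    by (rule Lbar_props(4)[OF f a_meas b_meas a_sym a_ell b_locbdd])
  define h where "h = Lbar a b f"
  define g where "g = (\<lambda>w. \<alpha> * f w - h w)"
  have hE: "h \<in> borel_measurable (restrict_space borel E)"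
    unfolding h_def by (rule measurable_restrict_mono[OF Lm E_sub])
  have fE: "f \<in> borel_measurable (restrict_space borel E)"
    by (rule measurable_restrict_space1[OF fm])
  have hb: "\<bar>h w\<bar> \<le> BL" if "w \<in> E" for w
  proof -
    have "w \<in> {0..} \<times> UNIV" using E_sub that by blast
    then have "0 \<le> fst w" by (simp add: mem_Times_iff)
    then show ?thesis using BL unfolding h_def by blast
  qed
  have gB: "g \<in> bB E"
  proof -
    have "g \<in> borel_measurable (restrict_space borel E)"
      unfolding g_def using fE hE by measurable
    moreover have "bounded (g ` E)"
      unfolding bounded_iff
    proof (intro exI ballI)
      fix y assume "y \<in> g ` E"
      then obtain w where w: "w \<in> E" "y = g w" by blast
      have "\<bar>f w\<bar> \<le> Bf" using Bf by blast
      then have "\<bar>\<alpha> * f w\<bar> \<le> \<alpha> * Bf" using a by (simp add: abs_mult)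
      then show "norm y \<le> \<alpha> * Bf + BL" using hb[OF w(1)] w(2) unfolding g_def by simp
    qed
    ultimately show ?thesis unfolding bB_def by blast
  qed
  note rp' = rp[unfolded right_process_def]
  have R1: "\<forall>z\<in>E. prob_space (M z) \<and> sets (M z) = sets Om \<and> space (M z) = space Om" using rp' by (elim conjE) assumption
  have R2: "\<forall>t\<ge>0. sigma_algebra (space Om) (F t) \<and> F t \<subseteq> sets Om" using rp' by (elim conjE) assumption
  have R4: "\<forall>t\<ge>0. \<forall>\<omega>\<in>space Om. X t \<omega> \<in> E" using rp' by (elim conjE) assumption
  have R5: "\<forall>t\<ge>0. X t \<in> measurable (sigma (space Om) (F t)) borel" using rp' by (elim conjE) assumption
  have R6: "\<forall>z\<in>E. AE \<omega> in M z. X 0 \<omega> = z" using rp' by (elim conjE) assumption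
  have R7: "\<forall>\<omega>\<in>space Om. \<forall>t\<ge>0. continuous (at_right t) (\<lambda>s. X s \<omega>)" using rp' by (elim conjE) assumption
  show "gen_pair E M X \<alpha> f (Lbar a b f)"
    unfolding gen_pair_def
  proof (intro bexI[OF _ gB] conjI ballI)
    fix z assume z: "z \<in> E"
    show "Res M X \<alpha> g z = f z"
      unfolding g_def
    proof (rule main_res[OF a z _ _ _ _ _ _ _ _ hE hb fm _ ])
      show "prob_space (M z)" "sets (M z) = sets Om" "space (M z) = space Om" using R1 z by auto
      show "\<And>t. t \<ge> 0 \<Longrightarrow> sigma_algebra (space Om) (F t) \<and> F t \<subseteq> sets Om" using R2 by blast
      show "\<And>t \<omega>. t \<ge> 0 \<Longrightarrow> \<omega> \<in> space Om \<Longrightarrow> X t \<omega> \<in> E" using R4 by blast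
      show "\<And>t. t \<ge> 0 \<Longrightarrow> X t \<in> measurable (sigma (space Om) (F t)) borel" using R5 by blast
      show "AE \<omega> in M z. X 0 \<omega> = z" using R6 z by blast
      show "\<And>\<omega> t. \<omega> \<in> space Om \<Longrightarrow> t \<ge> 0 \<Longrightarrow> continuous (at_right t) (\<lambda>s. X s \<omega>)" using R7 by blast
      show "\<And>w. \<bar>f w\<bar> \<le> Bf" using Bf by blast
      show "martingale (M z) F (\<lambda>t \<omega>. f (X t \<omega>) - f (X 0 \<omega>) - (LINT r:{0..t}|lborel. h (X r \<omega>)))"
        unfolding h_def by (rule mp_mart[OF z f])
    qed
  next
    fix z assume "z \<in> E"
    show "Lbar a b f z = \<alpha> * f z - g z" unfolding g_def h_def by simp
  qed
qed

end
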